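(* In the perceptive model, the neighbors discovery task can be solved deterministically in $O(\log N)$ rounds.
   Context: Model (perceptive): $n>4$ agents are at distinct, arbitrary initial positions on a circle of circumference $1$ and act in synchronised unit-time rounds. Each agent has its own notion of right (clockwise) and left; these need not be consistent across agents. At the start of each round every agent $a$ chooses $\mathrm{dir}_a\in\{\text{right},\text{left}\}$ and moves at unit speed. Agents never pass: two colliding agents instantly reverse direction. There is no communication. At the end of each round every agent learns two values, both measured relative to its start-of-round position and in its own orientation: - the clockwise distance to its end-of-round position; - the distance to its first collision in that round. Agents have distinct IDs in $\{1,\dots,N\}$ with $N\ge n$ known. For an agent $a$, $\mathrm{Left}(a)$ and $\mathrm{Right}(a)$ denote its immediate neighbours on the ring in its left and right directions (by its own orientation). Neighbors discovery task: each agent $a$ must - learn the positions of $\mathrm{Left}(a)$ and $\mathrm{Right}(a)$ relative to its own initial position, and - determine whether $\mathrm{Left}(a)$ and $\mathrm{Right}(a)$ have the same sense of direction as $a$. *)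

theory Defs
  imports Complex_Main
begin

(* Positions on the circle of circumference 1 are reals in [0,1);
   the global clockwise direction is the direction of increasing coordinate.
   cw i = True iff agent i's own "right" is the global clockwise direction. *)

type_synonym percept = "real \<times> real option"
  (* (own-clockwise distance start -> end of round,  distance travelled to first collision) *)

definition own_sgn :: "(nat \<Rightarrow> bool) \<Rightarrow> nat \<Rightarrow> real" where
  "own_sgn cw i = (if cw i then 1 else -1)"

(* global velocity: +1 (clockwise) iff the chosen own direction (True = own right) agrees
   with the agent's orientation *)
definition velocity :: "(nat \<Rightarrow> bool) \<Rightarrow> (nat \<Rightarrow> bool) \<Rightarrow> nat \<Rightarrow> real" where
  "velocity cw d i = (if d i = cw i then 1 else -1)"

definition rank :: "nat \<Rightarrow> (nat \<Rightarrow> real) \<Rightarrow> nat \<Rightarrow> nat" where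
  "rank n p i = card {j. j < n \<and> p j < p i}"

(* Collision dynamics via the standard "pass-through" equivalence.  Lifting to the real line,
   the virtual (non-interacting) particles are p i + m + v i * t (i < n, m integer).  cnt counts,
   relative to the initial labelling, the virtual particles strictly below y at time t. *)
definition cnt :: "nat \<Rightarrow> (nat \<Rightarrow> real) \<Rightarrow> (nat \<Rightarrow> real) \<Rightarrow> real \<Rightarrow> real \<Rightarrow> int" where
  "cnt n p v t y =
     int (card {(i, m::int). i < n \<and> 0 \<le> p i + real_of_int m \<and> p i + real_of_int m + v i * t < y})
   - int (card {(i, m::int). i < n \<and> p i + real_of_int m < 0 \<and> y \<le> p i + real_of_int m + v i * t})"

(* k-th order statistic (lifted) at time t: since agents never pass, the agent of rank k
   is at position ostat ... k t (lifted to the real line) *)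
definition ostat :: "nat \<Rightarrow> (nat \<Rightarrow> real) \<Rightarrow> (nat \<Rightarrow> real) \<Rightarrow> int \<Rightarrow> real \<Rightarrow> real" where
  "ostat n p v k t = Sup {y. cnt n p v t y \<le> k}"

definition lpos :: "nat \<Rightarrow> (nat \<Rightarrow> real) \<Rightarrow> (nat \<Rightarrow> real) \<Rightarrow> nat \<Rightarrow> real \<Rightarrow> real" where
  "lpos n p v i t = ostat n p v (int (rank n p i)) t"

definition collides :: "nat \<Rightarrow> (nat \<Rightarrow> real) \<Rightarrow> (nat \<Rightarrow> real) \<Rightarrow> nat \<Rightarrow> real \<Rightarrow> bool" where
  "collides n p v i t =
     (let r = int (rank n p i) in
        ostat n p v r t = ostat n p v (r + 1) t \<or> ostat n p v r t = ostat n p v (r - 1) t)"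

(* distance (= time, unit speed) travelled until the first collision in the round, if any *)
definition coll_dist :: "nat \<Rightarrow> (nat \<Rightarrow> real) \<Rightarrow> (nat \<Rightarrow> real) \<Rightarrow> nat \<Rightarrow> real option" where
  "coll_dist n p v i =
     (if \<exists>t\<in>{0<..1}. collides n p v i t
      then Some (Inf {t\<in>{0<..1}. collides n p v i t}) else None)"

definition end_dist :: "nat \<Rightarrow> (nat \<Rightarrow> real) \<Rightarrow> (nat \<Rightarrow> real) \<Rightarrow> (nat \<Rightarrow> bool) \<Rightarrow> nat \<Rightarrow> real" where
  "end_dist n p v cw i = frac (own_sgn cw i * (lpos n p v i 1 - p i))"

(* execution of an algorithm: alg (ID) (own history) = chosen direction (True = own right).
   Returns positions at the start of round r+1 and each agent's perception history. *)
fun run :: "nat \<Rightarrow> (nat \<Rightarrow> bool) \<Rightarrow> (nat \<Rightarrow> nat) \<Rightarrow> (nat \<Rightarrow> percept list \<Rightarrow> bool)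
            \<Rightarrow> (nat \<Rightarrow> real) \<Rightarrow> nat \<Rightarrow> (nat \<Rightarrow> real) \<times> (nat \<Rightarrow> percept list)" where
  "run n cw ids alg p0 0 = (p0, (\<lambda>i. []))"
| "run n cw ids alg p0 (Suc r) =
     (let (p, h) = run n cw ids alg p0 r;
          v = velocity cw (\<lambda>i. alg (ids i) (h i))
      in (\<lambda>i. frac (lpos n p v i 1),
          \<lambda>i. h i @ [(end_dist n p v cw i, coll_dist n p v i)]))"

definition own_coord :: "(nat \<Rightarrow> bool) \<Rightarrow> (nat \<Rightarrow> real) \<Rightarrow> nat \<Rightarrow> real \<Rightarrow> real" where
  "own_coord cw p a q = frac (own_sgn cw a * (q - p a))"

definition is_Right :: "nat \<Rightarrow> (nat \<Rightarrow> bool) \<Rightarrow> (nat \<Rightarrow> real) \<Rightarrow> nat \<Rightarrow> nat \<Rightarrow> bool" where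
  "is_Right n cw p a b \<longleftrightarrow> b < n \<and> b \<noteq> a \<and>
     (\<forall>c<n. c \<noteq> a \<longrightarrow> own_coord cw p a (p b) \<le> own_coord cw p a (p c))"

definition is_Left :: "nat \<Rightarrow> (nat \<Rightarrow> bool) \<Rightarrow> (nat \<Rightarrow> real) \<Rightarrow> nat \<Rightarrow> nat \<Rightarrow> bool" where
  "is_Left n cw p a b \<longleftrightarrow> b < n \<and> b \<noteq> a \<and>
     (\<forall>c<n. c \<noteq> a \<longrightarrow> own_coord cw p a (p c) \<le> own_coord cw p a (p b))"

(* output (xR, xL, sR, sL): positions of Right(a), Left(a) relative to a's initial position
   (own-clockwise distance), and whether Right(a) / Left(a) share a's sense of direction *)
definition nd_correct :: "nat \<Rightarrow> (nat \<Rightarrow> bool) \<Rightarrow> (nat \<Rightarrow> real) \<Rightarrow> nat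
                          \<Rightarrow> real \<times> real \<times> bool \<times> bool \<Rightarrow> bool" where
  "nd_correct n cw p a out \<longleftrightarrow>
     (case out of (xR, xL, sR, sL) \<Rightarrow>
       (\<exists>b. is_Right n cw p a b \<and> xR = own_coord cw p a (p b) \<and> (sR \<longleftrightarrow> cw b = cw a)) \<and>
       (\<exists>b. is_Left n cw p a b \<and> xL = own_coord cw p a (p b) \<and> (sL \<longleftrightarrow> cw b = cw a)))"

definition valid_config :: "nat \<Rightarrow> nat \<Rightarrow> (nat \<Rightarrow> real) \<Rightarrow> (nat \<Rightarrow> nat) \<Rightarrow> bool" where
  "valid_config N n p ids \<longleftrightarrow> 4 < n \<and> n \<le> N \<and>
     (\<forall>i<n. 0 \<le> p i \<and> p i < 1) \<and> inj_on p {..<n} \<and>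
     inj_on ids {..<n} \<and> (\<forall>i<n. ids i \<in> {1..N})"

end

theory Submission
  imports Defs
begin


definition FF :: "nat \<Rightarrow> (nat \<Rightarrow> real) \<Rightarrow> real \<Rightarrow> int" where
  "FF n a y = (\<Sum>i<n. \<lceil>y - a i\<rceil>)"

lemma set1_eq:
  assumes "0 \<le> p" "p < (1::real)"
  shows "{m::int. 0 \<le> p + real_of_int m \<and> p + real_of_int m + c < y} = {0..<\<lceil>y - p - c\<rceil>}"
proof -
  have "0 \<le> p + real_of_int m \<longleftrightarrow> 0 \<le> m" for m
  proof
    assume "0 \<le> p + real_of_int m" then have "real_of_int m > -1" using assms by linarith
    then show "0 \<le> m" by simp
  next
    assume "0 \<le> m" then show "0 \<le> p + real_of_int m" using assms by simp
  qed
  moreover have "p + real_of_int m + c < y \<longleftrightarrow> m < \<lceil>y - p - c\<rceil>" for m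
    by (simp add: less_ceiling_iff) linarith
  ultimately show ?thesis by auto
qed

lemma set2_eq:
  assumes "0 \<le> p" "p < (1::real)"
  shows "{m::int. p + real_of_int m < 0 \<and> y \<le> p + real_of_int m + c} = {\<lceil>y - p - c\<rceil>..<0}"
proof -
  have "p + real_of_int m < 0 \<longleftrightarrow> m < 0" for m
  proof
    assume "p + real_of_int m < 0" then have "real_of_int m < 0" using assms by linarith
    then show "m < 0" by simp
  next
    assume "m < 0" then have "real_of_int m \<le> -1" by simp
    then show "p + real_of_int m < 0" using assms by simp
  qed
  moreover have "y \<le> p + real_of_int m + c \<longleftrightarrow> \<lceil>y - p - c\<rceil> \<le> m" for m
    by (simp add: ceiling_le_iff) linarith
  ultimately show ?thesis by auto
qed

lemma cnt_eq:
  assumes "\<forall>i<n. 0 \<le> p i \<and> p i < 1"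
  shows "cnt n p v t y = FF n (\<lambda>i. p i + v i * t) y"
proof -
  have e1: "{(i, m::int). i < n \<and> 0 \<le> p i + real_of_int m \<and> p i + real_of_int m + v i * t < y}
      = Sigma {..<n} (\<lambda>i. {m::int. 0 \<le> p i + real_of_int m \<and> p i + real_of_int m + v i * t < y})"
    by auto
  have e2: "{(i, m::int). i < n \<and> p i + real_of_int m < 0 \<and> y \<le> p i + real_of_int m + v i * t}
      = Sigma {..<n} (\<lambda>i. {m::int. p i + real_of_int m < 0 \<and> y \<le> p i + real_of_int m + v i * t})"
    by auto
  have c1: "card {(i, m::int). i < n \<and> 0 \<le> p i + real_of_int m \<and> p i + real_of_int m + v i * t < y}
      = (\<Sum>i<n. nat \<lceil>y - p i - v i * t\<rceil>)"
    unfolding e1 by (subst card_SigmaI) (auto simp: set1_eq assms)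
  have c2: "card {(i, m::int). i < n \<and> p i + real_of_int m < 0 \<and> y \<le> p i + real_of_int m + v i * t}
      = (\<Sum>i<n. nat (- \<lceil>y - p i - v i * t\<rceil>))"
    unfolding e2 by (subst card_SigmaI) (auto simp: set2_eq assms)
  have nn: "int (nat c) - int (nat (-c)) = c" for c :: int by simp
  show ?thesis unfolding cnt_def c1 c2 FF_def
    by (simp only: of_nat_sum sum_subtractf[symmetric] nn) (simp add: algebra_simps)
qed



lemma ex_delta_fin:
  fixes n :: nat
  assumes "\<And>i. i < n \<Longrightarrow> \<exists>d>0. \<forall>e. 0 < e \<and> e \<le> d \<longrightarrow> P i e"
  shows "\<exists>d>(0::real). \<forall>i<n. \<forall>e. 0 < e \<and> e \<le> d \<longrightarrow> P i e"
  using assms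
proof (induction n)
  case 0
  then show ?case by (intro exI[of _ 1]) auto
next
  case (Suc n)
  then obtain d1 where d1: "d1 > 0" "\<forall>i<n. \<forall>e. 0 < e \<and> e \<le> d1 \<longrightarrow> P i e" by auto
  obtain d2 where d2: "d2 > 0" "\<forall>e. 0 < e \<and> e \<le> d2 \<longrightarrow> P n e" using Suc.prems by blast
  show ?case
    apply (intro exI[of _ "min d1 d2"])
    using d1 d2 by (auto simp: less_Suc_eq)
qed

lemma FF_mono: "y \<le> y' \<Longrightarrow> FF n a y \<le> FF n a y'"
  unfolding FF_def by (intro sum_mono ceiling_mono) auto

lemma FF_lower: "real n * y - (\<Sum>i<n. a i) \<le> real_of_int (FF n a y)"
proof -
  have "real n * y - (\<Sum>i<n. a i) = (\<Sum>i<n. y - a i)" by (simp add: sum_subtractf)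
  also have "\<dots> \<le> (\<Sum>i<n. real_of_int \<lceil>y - a i\<rceil>)" by (intro sum_mono) simp
  finally show ?thesis by (simp add: FF_def)
qed

lemma FF_upper: "real_of_int (FF n a y) \<le> real n * y - (\<Sum>i<n. a i) + real n"
proof -
  have "(\<Sum>i<n. real_of_int \<lceil>y - a i\<rceil>) \<le> (\<Sum>i<n. y - a i + 1)"
    by (intro sum_mono) linarith
  also have "\<dots> = real n * y - (\<Sum>i<n. a i) + real n" by (simp add: sum.distrib sum_subtractf)
  finally show ?thesis by (simp add: FF_def)
qed

lemma ceil_left_const:
  assumes "0 \<le> u" "u < w - real_of_int \<lceil>w\<rceil> + 1"
  shows "\<lceil>w - u\<rceil> = \<lceil>w\<rceil>"
  using assms by (simp add: ceiling_eq_iff) linarith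

lemma FF_left_const: "\<exists>d>0. \<forall>u. 0 \<le> u \<and> u < d \<longrightarrow> FF n a (y - u) = FF n a y"
proof -
  have "\<exists>d>0. \<forall>i<n. \<forall>e. 0 < e \<and> e \<le> d \<longrightarrow> (\<forall>u. 0 \<le> u \<and> u < e \<longrightarrow> \<lceil>(y - a i) - u\<rceil> = \<lceil>y - a i\<rceil>)"
  proof (rule ex_delta_fin)
    fix i assume "i < n"
    show "\<exists>d>0. \<forall>e. 0 < e \<and> e \<le> d \<longrightarrow> (\<forall>u. 0 \<le> u \<and> u < e \<longrightarrow> \<lceil>(y - a i) - u\<rceil> = \<lceil>y - a i\<rceil>)"
      apply (intro exI[of _ "(y - a i) - real_of_int \<lceil>y - a i\<rceil> + 1"])
      using ceil_left_const[of _ "y - a i"] by (auto simp: ceiling_correct) linarith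
  qed
  then obtain d where d: "d > 0" "\<forall>i<n. \<forall>u. 0 \<le> u \<and> u < d \<longrightarrow> \<lceil>(y - a i) - u\<rceil> = \<lceil>y - a i\<rceil>"
    by (meson order_refl)
  show ?thesis
    apply (intro exI[of _ d])
    using d unfolding FF_def by (auto intro!: sum.cong simp: algebra_simps)
qed

definition OS :: "nat \<Rightarrow> (nat \<Rightarrow> real) \<Rightarrow> int \<Rightarrow> real" where
  "OS n a k = Sup {y. FF n a y \<le> k}"

lemma OS_set_props:
  assumes "n > 0"
  shows "{y. FF n a y \<le> k} \<noteq> {}" "bdd_above {y. FF n a y \<le> k}"
proof -
  define y0 where "y0 = (real_of_int k - real n + (\<Sum>i<n. a i)) / real n"
  have "real n * y0 = real_of_int k - real n + (\<Sum>i<n. a i)" using assms by (simp add: y0_def)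
  then have "real_of_int (FF n a y0) \<le> real_of_int k" using FF_upper[of n a y0] by linarith
  then show "{y. FF n a y \<le> k} \<noteq> {}" by auto
  show "bdd_above {y. FF n a y \<le> k}"
  proof (rule bdd_aboveI)
    fix y assume "y \<in> {y. FF n a y \<le> k}"
    then have "real n * y - (\<Sum>i<n. a i) \<le> real_of_int k" using FF_lower[of n y a] by simp
    then show "y \<le> (real_of_int k + (\<Sum>i<n. a i)) / real n" using assms
      by (simp add: field_simps)
  qed
qed

lemma OS_above:
  assumes "n > 0" "y > OS n a k"
  shows "FF n a y > k"
proof (rule ccontr)
  assume "\<not> FF n a y > k"
  then have "y \<le> OS n a k" unfolding OS_def
    using OS_set_props[OF assms(1)] by (intro cSup_upper) auto
  then show False using assms by simp
qed

lemma OS_at: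
  assumes "n > 0"
  shows "FF n a (OS n a k) \<le> k"
proof (rule ccontr)
  let ?x = "OS n a k"
  assume nk: "\<not> FF n a ?x \<le> k"
  obtain d where d: "d > 0" "\<forall>u. 0 \<le> u \<and> u < d \<longrightarrow> FF n a (?x - u) = FF n a ?x"
    using FF_left_const by blast
  have "\<forall>y\<in>{y. FF n a y \<le> k}. y \<le> ?x - d"
  proof
    fix y assume y: "y \<in> {y. FF n a y \<le> k}"
    show "y \<le> ?x - d"
    proof (rule ccontr)
      assume "\<not> y \<le> ?x - d"
      then have "y > ?x - d" by simp
      show False
      proof (cases "y \<le> ?x")
        case True
        then have "FF n a y = FF n a ?x" using d(2)[rule_format, of "?x - y"] \<open>y > ?x - d\<close> by auto
        then show False using y nk by auto
      next
        case False
        then have "FF n a ?x \<le> FF n a y" by (intro FF_mono) simp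
        then show False using y nk by auto
      qed
    qed
  qed
  then have "?x \<le> ?x - d" unfolding OS_def
    using OS_set_props[OF assms(1)] by (intro cSup_least) auto
  then show False using d by simp
qed

lemma OS_eq:
  assumes "n > 0" "FF n a b \<le> k" "\<And>y. y > b \<Longrightarrow> FF n a y > k"
  shows "OS n a k = b"
  unfolding OS_def
proof (rule cSup_eq_maximum)
  show "b \<in> {y. FF n a y \<le> k}" using assms by simp
  show "\<And>x. x \<in> {y. FF n a y \<le> k} \<Longrightarrow> x \<le> b" using assms(3) by (meson mem_Collect_eq not_le)
qed

lemma ostat_OS:
  assumes "\<forall>i<n. 0 \<le> p i \<and> p i < 1"
  shows "ostat n p v k t = OS n (\<lambda>i. p i + v i * t) k"
  unfolding ostat_def OS_def using cnt_eq[OF assms] by simp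



definition vp :: "nat \<Rightarrow> (nat \<Rightarrow> real) \<Rightarrow> bool" where
  "vp n p \<longleftrightarrow> (\<forall>i<n. 0 \<le> p i \<and> p i < 1) \<and> inj_on p {..<n}"

lemma ceil_diff01:
  assumes "0 \<le> x" "x < 1" "0 \<le> y" "y < (1::real)"
  shows "\<lceil>x - y\<rceil> = (if y < x then 1 else 0)"
  using assms by (auto simp: ceiling_eq_iff)

lemma card_filter_sum:
  fixes n :: nat shows "int (card {j. j < n \<and> P j}) = (\<Sum>j<n. if P j then 1 else (0::int))"
proof -
  have "{j. j < n \<and> P j} = {j\<in>{..<n}. P j}" by auto
  moreover have "int (card {j\<in>{..<n}. P j}) = (\<Sum>j\<in>{j\<in>{..<n}. P j}. (1::int))" by simp
  moreover have "\<dots> = (\<Sum>j<n. if P j then 1 else 0)" by (rule sum.inter_filter) simp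
  ultimately show ?thesis by simp
qed

lemma rank_FF:
  assumes "vp n p" "i < n"
  shows "int (rank n p i) = FF n p (p i)"
  unfolding rank_def FF_def card_filter_sum
  using assms by (intro sum.cong) (auto simp: vp_def ceil_diff01)

lemma FF_jump:
  assumes "i < n" "y > a i"
  shows "FF n a y \<ge> FF n a (a i) + 1"
proof -
  have d: "FF n a y - FF n a (a i) = (\<Sum>j<n. \<lceil>y - a j\<rceil> - \<lceil>a i - a j\<rceil>)"
    unfolding FF_def by (simp add: sum_subtractf)
  have s: "\<lceil>y - a i\<rceil> - \<lceil>a i - a i\<rceil> \<le> (\<Sum>j<n. \<lceil>y - a j\<rceil> - \<lceil>a i - a j\<rceil>)"
    by (rule member_le_sum[where f="\<lambda>j. \<lceil>y - a j\<rceil> - \<lceil>a i - a j\<rceil>"])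
       (use assms in \<open>auto intro: ceiling_mono\<close>)
  have "\<lceil>y - a i\<rceil> \<ge> 1" using assms by (simp add: one_le_ceiling)
  moreover have "\<lceil>a i - a i\<rceil> = 0" by simp
  ultimately show ?thesis using d s by linarith
qed

lemma OS_rank:
  assumes "vp n p" "i < n"
  shows "OS n p (int (rank n p i)) = p i"
proof (rule OS_eq)
  show "0 < n" using assms by simp
  show "FF n p (p i) \<le> int (rank n p i)" using rank_FF[OF assms] by simp
  fix y assume "y > p i"
  then show "FF n p y > int (rank n p i)" using FF_jump[OF assms(2), of p y] rank_FF[OF assms] by simp
qed

lemma FF_shift1: "FF n a (y + 1) = FF n a y + int n"
proof -
  have e: "y + 1 - a i = (y - a i) + 1" for i by simp
  have "FF n a (y + 1) = (\<Sum>i<n. \<lceil>y - a i\<rceil> + 1)"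
    unfolding FF_def e ceiling_add_one by simp
  then show ?thesis by (simp add: sum.distrib FF_def)
qed

lemma OS_shift1:
  assumes "n > 0"
  shows "OS n a (k + int n) = OS n a k + 1"
proof (rule OS_eq[OF assms])
  show "FF n a (OS n a k + 1) \<le> k + int n" using FF_shift1 OS_at[OF assms] by simp
  fix y assume "y > OS n a k + 1"
  then have "FF n a (y - 1) > k" by (intro OS_above[OF assms]) simp
  then show "FF n a y > k + int n" using FF_shift1[of n a "y - 1"] by simp
qed

lemma OS_shift_nat:
  assumes "n > 0"
  shows "OS n a (k + int n * int m) = OS n a k + real m"
proof (induction m)
  case 0 then show ?case by simp
next
  case (Suc m)
  have "OS n a (k + int n * int (Suc m)) = OS n a ((k + int n * int m) + int n)"
    by (simp add: algebra_simps)
  also have "\<dots> = OS n a k + real (Suc m)" using OS_shift1[OF assms] Suc by simp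
  finally show ?case .
qed

lemma OS_mod:
  assumes "n > 0"
  shows "OS n a k = OS n a (k mod int n) + real_of_int (k div int n)"
proof (cases "k div int n \<ge> 0")
  case True
  have "OS n a k = OS n a (k mod int n + int n * int (nat (k div int n)))"
    using True by simp
  also have "\<dots> = OS n a (k mod int n) + real (nat (k div int n))"
    by (rule OS_shift_nat[OF assms])
  finally show ?thesis using True by simp
next
  case False
  have "OS n a (k mod int n) = OS n a (k + int n * int (nat (- (k div int n))))"
    using False by (simp add: algebra_simps minus_mod_eq_mult_div[symmetric])
  also have "\<dots> = OS n a k + real (nat (- (k div int n)))"
    by (rule OS_shift_nat[OF assms])
  finally show ?thesis using False by simp
qed

lemma rank_lt: "i < n \<Longrightarrow> vp n p \<Longrightarrow> rank n p i < n"
proof -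
  assume "i < n" "vp n p"
  have "{j. j < n \<and> p j < p i} \<subset> {..<n}" using \<open>i < n\<close> by auto
  then show ?thesis unfolding rank_def by (metis card_lessThan finite_lessThan psubset_card_mono)
qed

lemma rank_mono:
  assumes "vp n p" "i < n" "l < n" "p i < p l"
  shows "rank n p i < rank n p l"
proof -
  have "{j. j < n \<and> p j < p i} \<subset> {j. j < n \<and> p j < p l}" using assms by auto
  then show ?thesis unfolding rank_def by (intro psubset_card_mono) auto
qed

lemma rank_iff:
  assumes "vp n p" "i < n" "l < n"
  shows "rank n p i < rank n p l \<longleftrightarrow> p i < p l"
proof
  assume a: "rank n p i < rank n p l"
  show "p i < p l"
  proof (rule ccontr)
    assume "\<not> p i < p l"
    then have "p l < p i \<or> p l = p i" by auto
    then show False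
    proof
      assume "p l < p i" then show False using rank_mono[OF assms(1,3,2)] a by simp
    next
      assume "p l = p i" then have "l = i" using assms unfolding vp_def by (auto dest: inj_onD)
      then show False using a by simp
    qed
  qed
qed (rule rank_mono[OF assms])

lemma rank_inj: "vp n p \<Longrightarrow> inj_on (rank n p) {..<n}"
proof (rule inj_onI)
  fix i l assume a: "vp n p" "i \<in> {..<n}" "l \<in> {..<n}" "rank n p i = rank n p l"
  show "i = l"
  proof (rule ccontr)
    assume "i \<noteq> l"
    then have "p i \<noteq> p l" using a unfolding vp_def by (auto dest: inj_onD)
    then have "p i < p l \<or> p l < p i" by auto
    then show False using rank_mono[OF a(1)] a by fastforce
  qed
qed

lemma rank_surj: "vp n p \<Longrightarrow> rank n p ` {..<n} = {..<n}"
  by (rule endo_inj_surj) (auto simp: rank_lt rank_inj)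

lemma rank_ex: "vp n p \<Longrightarrow> j < n \<Longrightarrow> \<exists>i<n. rank n p i = j"
  using rank_surj by (metis imageE lessThan_iff)

lemma OS_range:
  assumes "vp n p" "0 \<le> j" "j < int n"
  shows "0 \<le> OS n p j \<and> OS n p j < 1"
proof -
  have "nat j < n" using assms by simp
  then obtain i where "i < n" "rank n p i = nat j" using rank_ex[OF assms(1)] by blast
  then have "OS n p j = p i" using OS_rank[OF assms(1)] assms by (metis int_nat_eq)
  then show ?thesis using assms \<open>i < n\<close> by (simp add: vp_def)
qed

lemma OS_strict:
  assumes "vp n p" "0 \<le> j" "j < l" "l < int n"
  shows "OS n p j < OS n p l"
proof -
  have "nat j < n" "nat l < n" using assms by auto
  then obtain i i' where i: "i < n" "rank n p i = nat j" and i': "i' < n" "rank n p i' = nat l"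
    using rank_ex[OF assms(1)] by metis
  have "OS n p j = p i" using OS_rank[OF assms(1) i(1)] i assms by simp
  moreover have "OS n p l = p i'" using OS_rank[OF assms(1) i'(1)] i' assms by simp
  moreover have "p i < p i'" using rank_iff[OF assms(1) i(1) i'(1)] i i' assms by simp
  ultimately show ?thesis by simp
qed



definition Sv :: "nat \<Rightarrow> (nat \<Rightarrow> real) \<Rightarrow> int" where
  "Sv n v = (\<Sum>i<n. if v i = 1 then 1 else -1)"

definition pm1 :: "nat \<Rightarrow> (nat \<Rightarrow> real) \<Rightarrow> bool" where
  "pm1 n v \<longleftrightarrow> (\<forall>i<n. v i = 1 \<or> v i = -1)"

lemma FF_t1:
  assumes "pm1 n v"
  shows "FF n (\<lambda>i. p i + v i * 1) y = FF n p y - Sv n v"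
proof -
  have "\<lceil>y - (p i + v i * 1)\<rceil> = \<lceil>y - p i\<rceil> - (if v i = 1 then 1 else -1)" if "i < n" for i
  proof (cases "v i = 1")
    case True
    have e: "y - (p i + v i * 1) = (y - p i) - 1" using True by simp
    show ?thesis unfolding e using True ceiling_diff_one[of "y - p i"] by simp
  next
    case False
    then have "v i = -1" using assms that by (auto simp: pm1_def)
    then have e: "y - (p i + v i * 1) = (y - p i) + 1" by simp
    show ?thesis unfolding e using \<open>v i = -1\<close> ceiling_add_one[of "y - p i"] by simp
  qed
  then show ?thesis unfolding FF_def Sv_def by (simp add: sum_subtractf)
qed

lemma OS_t1:
  assumes "pm1 n v"
  shows "OS n (\<lambda>i. p i + v i * 1) k = OS n p (k + Sv n v)"
  unfolding OS_def FF_t1[OF assms] by (simp add: algebra_simps)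

definition ff :: "nat \<Rightarrow> (nat \<Rightarrow> real) \<Rightarrow> int \<Rightarrow> nat \<Rightarrow> int" where
  "ff n p S i = (int (rank n p i) + S) mod int n"

lemma ff_range: "n > 0 \<Longrightarrow> 0 \<le> ff n p S i \<and> ff n p S i < int n"
  unfolding ff_def by simp

lemma round_pos:
  assumes "vp n p" "n > 0" "pm1 n v" "i < n"
  shows "frac (lpos n p v i 1) = OS n p (ff n p (Sv n v) i)"
proof -
  have pr: "\<forall>i<n. 0 \<le> p i \<and> p i < 1" using assms(1) by (simp add: vp_def)
  have "lpos n p v i 1 = OS n p (int (rank n p i) + Sv n v)"
    unfolding lpos_def ostat_OS[OF pr] OS_t1[OF assms(3)] ..
  also have "\<dots> = OS n p (ff n p (Sv n v) i) + real_of_int ((int (rank n p i) + Sv n v) div int n)"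
    unfolding ff_def by (rule OS_mod[OF assms(2)])
  finally have "frac (lpos n p v i 1) = frac (OS n p (ff n p (Sv n v) i))" by simp
  also have "\<dots> = OS n p (ff n p (Sv n v) i)"
    using OS_range[OF assms(1)] ff_range[OF assms(2)] by (simp add: frac_eq)
  finally show ?thesis .
qed

lemma ff_inj:
  assumes "vp n p" "n > 0"
  shows "inj_on (ff n p S) {..<n}"
proof (rule inj_onI)
  fix i l assume a: "i \<in> {..<n}" "l \<in> {..<n}" "ff n p S i = ff n p S l"
  then have "int n dvd (int (rank n p i) + S) - (int (rank n p l) + S)"
    unfolding ff_def using mod_eq_dvd_iff by blast
  then have d: "int n dvd int (rank n p i) - int (rank n p l)" by simp
  have "rank n p i < n" "rank n p l < n" using a rank_lt assms by auto
  then have "\<bar>int (rank n p i) - int (rank n p l)\<bar> < int n" by auto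
  then have "int (rank n p i) - int (rank n p l) = 0"
  proof -
    assume lt: "\<bar>int (rank n p i) - int (rank n p l)\<bar> < int n"
    show ?thesis
    proof (rule ccontr)
      assume nz: "int (rank n p i) - int (rank n p l) \<noteq> 0"
      have "\<bar>int n\<bar> \<le> \<bar>int (rank n p i) - int (rank n p l)\<bar>" by (rule dvd_imp_le_int[OF nz d])
      then show False using lt by simp
    qed
  qed
  then have "rank n p i = rank n p l" by simp
  then show "i = l" using rank_inj[OF assms(1)] a by (auto dest: inj_onD)
qed

lemma ff_image:
  assumes "vp n p" "n > 0"
  shows "ff n p S ` {..<n} = {0..<int n}"
proof (rule card_subset_eq)
  show "finite {0..<int n}" by simp
  show "ff n p S ` {..<n} \<subseteq> {0..<int n}" using ff_range[OF assms(2)] by auto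
  show "card (ff n p S ` {..<n}) = card {0..<int n}"
    using card_image[OF ff_inj[OF assms]] by simp
qed

lemma sum_ff:
  assumes "vp n p" "n > 0"
  shows "(\<Sum>i<n. h (ff n p S i)) = (\<Sum>j\<in>{0..<int n}. h j)"
proof -
  have "(\<Sum>j\<in>{0..<int n}. h j) = (\<Sum>j\<in>ff n p S ` {..<n}. h j)" using ff_image[OF assms] by simp
  also have "\<dots> = (\<Sum>i<n. h (ff n p S i))" by (rule sum.reindex_cong[OF ff_inj[OF assms]]) auto
  finally show ?thesis by simp
qed

lemma ff0: "vp n p \<Longrightarrow> i < n \<Longrightarrow> ff n p 0 i = int (rank n p i)"
  unfolding ff_def using rank_lt by simp

lemma FF_perm:
  assumes "vp n p" "n > 0"
  shows "FF n (\<lambda>i. OS n p (ff n p S i)) y = FF n p y"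
proof -
  have "FF n p y = (\<Sum>i<n. \<lceil>y - OS n p (ff n p 0 i)\<rceil>)"
    unfolding FF_def using ff0[OF assms(1)] OS_rank[OF assms(1)] by (intro sum.cong) auto
  also have "\<dots> = (\<Sum>j\<in>{0..<int n}. \<lceil>y - OS n p j\<rceil>)" by (rule sum_ff[OF assms])
  also have "\<dots> = FF n (\<lambda>i. OS n p (ff n p S i)) y"
    unfolding FF_def by (rule sum_ff[OF assms, symmetric])
  finally show ?thesis ..
qed

lemma OS_perm:
  assumes "vp n p" "n > 0"
  shows "OS n (\<lambda>i. OS n p (ff n p S i)) = OS n p"
proof
  fix k
  let ?q = "\<lambda>i. OS n p (ff n p S i)"
  have "OS n ?q k = Sup {y. FF n ?q y \<le> k}" by (rule OS_def)
  also have "{y. FF n ?q y \<le> k} = {y. FF n p y \<le> k}" using FF_perm[OF assms] by simp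
  also have "Sup {y. FF n p y \<le> k} = OS n p k" by (rule OS_def[symmetric])
  finally show "OS n ?q k = OS n p k" .
qed

lemma OS_inj:
  assumes "vp n p" "0 \<le> j" "j < int n" "0 \<le> l" "l < int n" "OS n p j = OS n p l"
  shows "j = l"
proof (rule ccontr)
  assume "j \<noteq> l"
  then have "j < l \<or> l < j" by auto
  then show False
  proof
    assume "j < l" then have "OS n p j < OS n p l" using OS_strict[OF assms(1)] assms by blast
    then show False using assms by simp
  next
    assume "l < j" then have "OS n p l < OS n p j" using OS_strict[OF assms(1)] assms by blast
    then show False using assms by simp
  qed
qed

lemma vp_perm:
  assumes "vp n p" "n > 0"
  shows "vp n (\<lambda>i. OS n p (ff n p S i))"
  unfolding vp_def
proof
  show "\<forall>i<n. 0 \<le> OS n p (ff n p S i) \<and> OS n p (ff n p S i) < 1"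
    using OS_range[OF assms(1)] ff_range[OF assms(2)] by auto
  show "inj_on (\<lambda>i. OS n p (ff n p S i)) {..<n}"
  proof (rule inj_onI)
    fix i l assume "i \<in> {..<n}" "l \<in> {..<n}" "OS n p (ff n p S i) = OS n p (ff n p S l)"
    then have "ff n p S i = ff n p S l" using OS_inj[OF assms(1)] ff_range[OF assms(2)] by blast
    then show "i = l" using ff_inj[OF assms] \<open>i \<in> {..<n}\<close> \<open>l \<in> {..<n}\<close> by (auto dest: inj_onD)
  qed
qed

lemma rank_perm:
  assumes "vp n p" "n > 0" "i < n"
  shows "int (rank n (\<lambda>i. OS n p (ff n p S i)) i) = ff n p S i"
proof -
  let ?f = "ff n p S"
  have "{l. l < n \<and> OS n p (?f l) < OS n p (?f i)} = {l. l < n \<and> ?f l < ?f i}"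
  proof -
    have "OS n p (?f l) < OS n p (?f i) \<longleftrightarrow> ?f l < ?f i" if "l < n" for l
    proof
      assume "?f l < ?f i" then show "OS n p (?f l) < OS n p (?f i)"
        using OS_strict[OF assms(1)] ff_range[OF assms(2)] by blast
    next
      assume h: "OS n p (?f l) < OS n p (?f i)"
      show "?f l < ?f i"
      proof (rule ccontr)
        assume "\<not> ?f l < ?f i"
        then have "?f i < ?f l \<or> ?f i = ?f l" by auto
        then show False
        proof
          assume "?f i < ?f l"
          then have "OS n p (?f i) < OS n p (?f l)"
            using OS_strict[OF assms(1)] ff_range[OF assms(2)] by blast
          then show False using h by simp
        next
          assume "?f i = ?f l" then show False using h by simp
        qed
      qed
    qed
    then show ?thesis by auto
  qed
  moreover have "?f ` {l. l < n \<and> ?f l < ?f i} = {0..<?f i}"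
  proof -
    have "?f ` {l. l < n \<and> ?f l < ?f i} = {j\<in>?f ` {..<n}. j < ?f i}" by auto
    also have "\<dots> = {0..<?f i}" using ff_image[OF assms(1,2)] ff_range[OF assms(2), of p S i] by auto
    finally show ?thesis .
  qed
  moreover have "card (?f ` {l. l < n \<and> ?f l < ?f i}) = card {l. l < n \<and> ?f l < ?f i}"
    by (rule card_image) (rule inj_on_subset[OF ff_inj[OF assms(1,2)]], auto)
  ultimately have "rank n (\<lambda>i. OS n p (ff n p S i)) i = card {0..<?f i}"
    unfolding rank_def by simp
  then show ?thesis using ff_range[OF assms(2), of p S i] by simp
qed

lemma Sv_neg:
  assumes "pm1 n v" shows "Sv n (\<lambda>i. - v i) = - Sv n v"
proof -
  have "(if - v i = 1 then 1 else -1) = - (if v i = 1 then 1 else (-1::int))" if "i < n" for i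
    using assms that by (auto simp: pm1_def)
  then have "Sv n (\<lambda>i. - v i) = (\<Sum>i<n. - (if v i = 1 then 1 else (-1::int)))"
    unfolding Sv_def by (intro sum.cong) auto
  also have "\<dots> = - Sv n v" unfolding Sv_def by (simp add: sum_negf)
  finally show ?thesis .
qed

lemma two_rounds:
  assumes "vp n p" "n > 0" "pm1 n v" "i < n"
  defines "p' \<equiv> \<lambda>i. frac (lpos n p v i 1)"
  shows "frac (lpos n p' (\<lambda>i. - v i) i 1) = p i"
proof -
  let ?S = "Sv n v"
  let ?q = "\<lambda>i. OS n p (ff n p ?S i)"
  have pq: "\<forall>i<n. p' i = ?q i" using round_pos[OF assms(1-3)] by (simp add: p'_def)
  have vq: "vp n ?q" by (rule vp_perm[OF assms(1,2)])
  have pm: "pm1 n (\<lambda>i. - v i)" using assms(3) by (auto simp: pm1_def)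
  have "lpos n p' (\<lambda>i. - v i) i 1 = lpos n ?q (\<lambda>i. - v i) i 1"
  proof -
    have "cnt n p' w t y = cnt n ?q w t y" for w t y
      unfolding cnt_def using pq by (intro arg_cong2[where f="(-)"] arg_cong[where f=int] arg_cong[where f=card]) auto
    then have "ostat n p' w k t = ostat n ?q w k t" for w k t unfolding ostat_def by simp
    moreover have "rank n p' i = rank n ?q i" unfolding rank_def using pq assms(4) by (intro arg_cong[where f=card]) auto
    ultimately show ?thesis unfolding lpos_def by simp
  qed
  then have "frac (lpos n p' (\<lambda>i. - v i) i 1) = OS n ?q (ff n ?q (Sv n (\<lambda>i. - v i)) i)"
    using round_pos[OF vq assms(2) pm assms(4)] by simp
  also have "\<dots> = OS n p (ff n ?q (- ?S) i)" using OS_perm[OF assms(1,2)] Sv_neg[OF assms(3)] by simp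
  also have "ff n ?q (- ?S) i = int (rank n p i)"
  proof -
    have r: "int (rank n ?q i) = ff n p ?S i" by (rule rank_perm[OF assms(1,2,4)])
    have "ff n ?q (- ?S) i = (int (rank n ?q i) - ?S) mod int n" by (simp add: ff_def)
    then have "ff n ?q (- ?S) i = (ff n p ?S i - ?S) mod int n" by (simp only: r)
    also have "\<dots> = (int (rank n p i) + ?S - ?S) mod int n" unfolding ff_def by (simp add: mod_diff_left_eq)
    also have "\<dots> = int (rank n p i)" using rank_lt[OF assms(4,1)] by simp
    finally show ?thesis .
  qed
  finally show ?thesis using OS_rank[OF assms(1,4)] by simp
qed



lemma notint_01: "0 < u \<Longrightarrow> u < (1::real) \<Longrightarrow> u \<notin> \<int>"
proof
  assume "0 < u" "u < 1" "u \<in> \<int>"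
  then obtain k where "u = of_int k" by (auto elim: Ints_cases)
  then show False using \<open>0 < u\<close> \<open>u < 1\<close> by simp
qed

lemma frac_small_pos: "0 < u \<Longrightarrow> u < (1::real) \<Longrightarrow> frac u = u \<and> frac (-u) = 1 - u"
  using notint_01[of u] by (simp add: frac_eq frac_neg)

lemma frac_small_neg: "-1 < u \<Longrightarrow> u < (0::real) \<Longrightarrow> frac u = u + 1 \<and> frac (-u) = -u"
proof
  assume a: "-1 < u" "u < 0"
  have "u - (u + 1) \<in> \<int>" by simp
  then show "frac u = u + 1" using a by (subst frac_unique_iff) simp
  show "frac (-u) = -u" using a by (simp add: frac_eq)
qed

lemma helper_opp:
  fixes u t s :: real
  assumes "s = 1 \<or> s = -1" "-1 < u" "u < 1" "u \<noteq> 0" "0 \<le> t" "2*t < frac (-(s*u))"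
  shows "\<lceil>u + 2*s*t\<rceil> = \<lceil>u\<rceil> \<and> real_of_int \<lceil>u\<rceil> - 1 < u + 2*s*t \<and> u + 2*s*t < real_of_int \<lceil>u\<rceil>"
proof -
  consider "0 < u" | "u < 0" using assms by linarith
  then show ?thesis
  proof cases
    case 1
    then have c: "\<lceil>u\<rceil> = 1" using assms by (simp add: ceiling_eq_iff)
    have "0 < u + 2*s*t \<and> u + 2*s*t < 1" using assms(1)
    proof
      assume "s = 1" then show ?thesis using assms 1 frac_small_pos[OF 1 assms(3)] by simp
    next
      assume "s = -1" then show ?thesis using assms 1 frac_small_pos[OF 1 assms(3)] by simp
    qed
    then show ?thesis unfolding c by (simp add: ceiling_eq_iff)
  next
    case 2
    then have c: "\<lceil>u\<rceil> = 0" using assms by (simp add: ceiling_eq_iff)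
    have "-1 < u + 2*s*t \<and> u + 2*s*t < 0" using assms(1)
    proof
      assume "s = 1" then show ?thesis using assms 2 frac_small_neg[OF assms(2) 2] by simp
    next
      assume "s = -1" then show ?thesis using assms 2 frac_small_neg[OF assms(2) 2] by simp
    qed
    then show ?thesis unfolding c by (simp add: ceiling_eq_iff)
  qed
qed

lemma helper_same:
  fixes u :: real
  assumes "-1 < u" "u < 1" "u \<noteq> 0"
  shows "real_of_int \<lceil>u\<rceil> - 1 < u \<and> u < real_of_int \<lceil>u\<rceil>"
proof -
  consider "0 < u" | "u < 0" using assms by linarith
  then show ?thesis
  proof cases
    case 1
    then have c: "\<lceil>u\<rceil> = 1" using assms by (simp add: ceiling_eq_iff)
    then show ?thesis using 1 assms by simp
  next
    case 2
    then have c: "\<lceil>u\<rceil> = 0" using assms by (simp add: ceiling_eq_iff)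
    then show ?thesis using 2 assms by simp
  qed
qed

lemma diff_props:
  assumes "vp n p" "a < n" "i < n" "i \<noteq> a"
  shows "-1 < p a - p i \<and> p a - p i < 1 \<and> p a - p i \<noteq> 0"
proof -
  have "p a \<noteq> p i" using assms unfolding vp_def by (auto dest: inj_onD)
  moreover have "0 \<le> p a" "p a < 1" "0 \<le> p i" "p i < 1" using assms unfolding vp_def by auto
  ultimately show ?thesis by linarith
qed

definition ec :: "real \<Rightarrow> (nat \<Rightarrow> real) \<Rightarrow> nat \<Rightarrow> nat \<Rightarrow> real" where
  "ec s p a i = frac (s * (p i - p a))"

lemma ec_alt: "ec s p a i = frac (- (s * (p a - p i)))"
  unfolding ec_def by (simp add: algebra_simps)

lemma ec_pos:
  assumes "vp n p" "a < n" "i < n" "i \<noteq> a" "s = 1 \<or> s = -1"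
  shows "0 < ec s p a i"
proof -
  have d: "-1 < p a - p i" "p a - p i < 1" "p a - p i \<noteq> 0" using diff_props[OF assms(1-4)] by auto
  consider "0 < p a - p i" | "p a - p i < 0" using d by linarith
  then show ?thesis
  proof cases
    case 1
    note f = frac_small_pos[OF 1 d(2)]
    show ?thesis using assms(5)
    proof
      assume "s = 1" then have "ec s p a i = 1 - (p a - p i)" using f unfolding ec_alt by simp
      then show ?thesis using d by simp
    next
      assume "s = -1" then have "ec s p a i = p a - p i" using f unfolding ec_alt by simp
      then show ?thesis using 1 by simp
    qed
  next
    case 2
    note f = frac_small_neg[OF d(1) 2]
    show ?thesis using assms(5)
    proof
      assume "s = 1" then have "ec s p a i = - (p a - p i)" using f unfolding ec_alt by simp
      then show ?thesis using 2 by simp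
    next
      assume "s = -1" then have "ec s p a i = p a - p i + 1" using f unfolding ec_alt by simp
      then show ?thesis using d by simp
    qed
  qed
qed

lemma ec_inj:
  assumes "vp n p" "a < n" "i < n" "b < n" "s = 1 \<or> s = -1" "ec s p a i = ec s p a b"
  shows "i = b"
proof -
  have "frac (s * (p i - p a)) = frac (s * (p b - p a))" using assms(6) by (simp add: ec_def)
  then have "frac (s * (p i - p a) - s * (p b - p a)) = 0" by (rule frac_diff_eq)
  then have "s * (p i - p a) - s * (p b - p a) \<in> \<int>" by simp
  then have z: "s * (p i - p b) \<in> \<int>" by (simp add: algebra_simps)
  have "p i = p b"
  proof (rule ccontr)
    assume "p i \<noteq> p b"
    moreover have "0 \<le> p i" "p i < 1" "0 \<le> p b" "p b < 1" using assms(1,3,4) unfolding vp_def by auto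
    ultimately have "0 < \<bar>p i - p b\<bar>" "\<bar>p i - p b\<bar> < 1" by auto
    moreover have "\<bar>s * (p i - p b)\<bar> = \<bar>p i - p b\<bar>" using assms(5) by auto
    moreover have "\<bar>s * (p i - p b)\<bar> \<in> \<int>" using z by (simp add: Ints_abs)
    ultimately show False using notint_01 by metis
  qed
  then show ?thesis using assms(1,3,4) unfolding vp_def by (auto dest: inj_onD)
qed



lemma terms_iso:
  assumes vp: "vp n p" and pm: "pm1 n v" and a: "a < n" and s: "s = 1 \<or> s = -1" and va: "v a = s"
    and t: "0 \<le> t" and i: "i < n" and opp: "v i = -s \<longrightarrow> 2*t < ec s p a i"
  shows "\<lceil>(p a + s*t) - (p i + v i * t)\<rceil> = \<lceil>p a - p i\<rceil> \<and>
         (i \<noteq> a \<longrightarrow> real_of_int \<lceil>(p a + s*t) - (p i + v i * t)\<rceil> - 1 < (p a + s*t) - (p i + v i * t)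
                   \<and> (p a + s*t) - (p i + v i * t) < real_of_int \<lceil>(p a + s*t) - (p i + v i * t)\<rceil>)"
proof (cases "i = a")
  case True then show ?thesis using va by simp
next
  case False
  note d = diff_props[OF vp a i False]
  have "v i = s \<or> v i = -s" using pm i s by (auto simp: pm1_def)
  then show ?thesis
  proof
    assume "v i = s"
    then have e: "(p a + s*t) - (p i + v i * t) = p a - p i" by simp
    show ?thesis unfolding e using helper_same[of "p a - p i"] d by simp
  next
    assume vi: "v i = -s"
    then have e: "(p a + s*t) - (p i + v i * t) = (p a - p i) + 2*s*t" by simp
    have "2*t < frac (-(s*(p a - p i)))" using opp vi by (simp add: ec_alt)
    then show ?thesis unfolding e using helper_opp[OF s, of "p a - p i" t] d t by simp
  qed
qed

lemma FF_rank_eq: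
  assumes vp: "vp n p" and a: "a < n"
    and h: "\<forall>i<n. \<lceil>y0 - A i\<rceil> = \<lceil>p a - p i\<rceil>"
  shows "FF n A y0 = int (rank n p a)"
proof -
  have "FF n A y0 = FF n p (p a)" unfolding FF_def using h by (intro sum.cong) auto
  then show ?thesis using rank_FF[OF vp a] by simp
qed

lemma sum_ind: "a < (n::nat) \<Longrightarrow> (\<Sum>i<n. if i = a then (1::int) else 0) = 1"
  by (simp add: sum.delta')

lemma isolated:
  assumes vp: "vp n p" and pm: "pm1 n v" and a: "a < n" and s: "s = 1 \<or> s = -1" and va: "v a = s"
    and t: "0 \<le> t" and opp: "\<forall>i<n. v i = -s \<longrightarrow> 2*t < ec s p a i"
  shows "\<not> collides n p v a t"
proof -
  let ?A = "\<lambda>i. p i + v i * t"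
  let ?y0 = "p a + s*t"
  let ?r = "int (rank n p a)"
  have n0: "n > 0" using a by simp
  have T: "\<lceil>(p a + s*t) - (p i + v i * t)\<rceil> = \<lceil>p a - p i\<rceil> \<and>
         (i \<noteq> a \<longrightarrow> real_of_int \<lceil>(p a + s*t) - (p i + v i * t)\<rceil> - 1 < (p a + s*t) - (p i + v i * t)
                   \<and> (p a + s*t) - (p i + v i * t) < real_of_int \<lceil>(p a + s*t) - (p i + v i * t)\<rceil>)"
    if "i < n" for i
    using terms_iso[OF vp pm a s va t that] opp that by blast
  have F0: "FF n ?A ?y0 = ?r" by (rule FF_rank_eq[OF vp a]) (use T in auto)
  have Aa: "?A a = ?y0" using va by simp
  have "\<exists>d>0. \<forall>i<n. \<forall>e. 0 < e \<and> e \<le> d \<longrightarrow>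
     (\<forall>u. 0 < u \<and> u < e \<longrightarrow> \<lceil>?y0 + u - ?A i\<rceil> = \<lceil>?y0 - ?A i\<rceil> + (if i = a then 1 else 0))"
  proof (rule ex_delta_fin)
    fix i assume i: "i < n"
    show "\<exists>d>0. \<forall>e. 0 < e \<and> e \<le> d \<longrightarrow>
      (\<forall>u. 0 < u \<and> u < e \<longrightarrow> \<lceil>?y0 + u - ?A i\<rceil> = \<lceil>?y0 - ?A i\<rceil> + (if i = a then 1 else 0))"
    proof (cases "i = a")
      case True
      show ?thesis
        apply (intro exI[of _ 1])
        using True va by (auto simp: ceiling_eq_iff)
    next
      case False
      let ?w = "?y0 - ?A i"
      have w: "real_of_int \<lceil>?w\<rceil> - 1 < ?w" "?w < real_of_int \<lceil>?w\<rceil>" using T[OF i] False by auto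
      have eq: "\<lceil>?y0 + u - ?A i\<rceil> = \<lceil>?w\<rceil>" if "0 < u" "u < real_of_int \<lceil>?w\<rceil> - ?w" for u
      proof -
        have e: "?y0 + u - ?A i = ?w + u" by simp
        have "\<lceil>?w + u\<rceil> = \<lceil>?w\<rceil>" using w that by (simp add: ceiling_eq_iff)
        then show ?thesis by (simp only: e)
      qed
      show ?thesis
        apply (intro exI[of _ "real_of_int \<lceil>?w\<rceil> - ?w"])
        using w eq False by auto
    qed
  qed
  then obtain d where d: "d > 0"
    "\<forall>i<n. \<forall>u. 0 < u \<and> u < d \<longrightarrow> \<lceil>?y0 + u - ?A i\<rceil> = \<lceil>?y0 - ?A i\<rceil> + (if i = a then 1 else 0)"
    by (meson order_refl)
  have Fd: "FF n ?A (?y0 + d/2) = ?r + 1"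
  proof -
    have "FF n ?A (?y0 + d/2) = (\<Sum>i<n. \<lceil>?y0 - ?A i\<rceil> + (if i = a then 1 else 0))"
      unfolding FF_def using d by (intro sum.cong) auto
    also have "\<dots> = FF n ?A ?y0 + 1" unfolding FF_def sum.distrib using sum_ind[OF a] by simp
    finally show ?thesis using F0 by simp
  qed
  have pr: "\<forall>i<n. 0 \<le> p i \<and> p i < 1" using vp by (simp add: vp_def)
  have o: "ostat n p v k t = OS n ?A k" for k by (rule ostat_OS[OF pr])
  have Or: "OS n ?A ?r = ?y0"
  proof (rule OS_eq[OF n0])
    show "FF n ?A ?y0 \<le> ?r" using F0 by simp
    fix y assume "y > ?y0"
    then have "FF n ?A y \<ge> FF n ?A (?A a) + 1" using FF_jump[OF a, of ?A y] Aa by (simp only:)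
    then show "FF n ?A y > ?r" using F0 Aa by simp
  qed
  have Or1: "OS n ?A (?r + 1) \<noteq> ?y0"
  proof
    assume "OS n ?A (?r + 1) = ?y0"
    then have "FF n ?A (?y0 + d/2) > ?r + 1" using d(1) by (intro OS_above[OF n0]) simp
    then show False using Fd by simp
  qed
  have Or2: "OS n ?A (?r - 1) \<noteq> ?y0"
  proof
    assume "OS n ?A (?r - 1) = ?y0"
    then have "FF n ?A ?y0 \<le> ?r - 1" using OS_at[OF n0, of ?A "?r - 1"] by simp
    then show False using F0 by simp
  qed
  show ?thesis unfolding collides_def Let_def o using Or Or1 Or2 by simp
qed



lemma ec_lt1: "ec s p a i < 1" unfolding ec_def by (rule frac_lt_1)

lemma collides_intro:
  assumes "ostat n p v k t = ostat n p v (k+1) t" "int (rank n p a) = k \<or> int (rank n p a) = k + 1"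
  shows "collides n p v a t"
  using assms unfolding collides_def Let_def by auto

lemma meeting:
  assumes vp: "vp n p" and pm: "pm1 n v" and a: "a < n" and s: "s = 1 \<or> s = -1" and va: "v a = s"
    and b: "b < n" "b \<noteq> a" and nb: "\<forall>c<n. c \<noteq> a \<longrightarrow> ec s p a b \<le> ec s p a c"
    and vb: "v b = -s"
  shows "collides n p v a (ec s p a b / 2)"
proof -
  let ?e = "ec s p a b"
  let ?t = "?e / 2"
  let ?A = "\<lambda>i. p i + v i * ?t"
  let ?y0 = "p a + s * ?t"
  let ?r = "int (rank n p a)"
  have n0: "n > 0" using a by simp
  have e0: "0 < ?e" using ec_pos[OF vp a b(1) b(2) s] .
  have e1: "?e < 1" by (rule ec_lt1)
  have t0: "0 \<le> ?t" using e0 by simp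
  define fl where "fl = \<lfloor>s * (p b - p a)\<rfloor>"
  have ee: "?e = s * (p b - p a) - real_of_int fl" unfolding ec_def fl_def frac_def by simp
  define M where "M = (if s = 1 then - fl else fl)"
  have yb: "?y0 - ?A b = real_of_int M"
    using s ee vb unfolding M_def by (auto simp: algebra_simps)
  have cyb: "\<lceil>?y0 - ?A b\<rceil> = M" unfolding yb by simp
  have pab: "p a - p b = real_of_int M - s * ?e"
    using s ee unfolding M_def by (auto simp: algebra_simps)
  have Db: "\<lceil>p a - p b\<rceil> = M \<or> \<lceil>p a - p b\<rceil> = M + 1"
    using s
  proof
    assume "s = 1"
    then have "\<lceil>p a - p b\<rceil> = M" unfolding pab using e0 e1 by (simp add: ceiling_eq_iff)
    then show ?thesis by simp
  next
    assume "s = -1"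
    then have "\<lceil>p a - p b\<rceil> = M + 1" unfolding pab using e0 e1 by (simp add: ceiling_eq_iff)
    then show ?thesis by simp
  qed
  have others: "\<lceil>?y0 - ?A i\<rceil> = \<lceil>p a - p i\<rceil>" if i: "i < n" "i \<noteq> b" for i
  proof -
    have "v i = -s \<longrightarrow> 2 * ?t < ec s p a i"
    proof
      assume vi: "v i = -s"
      then have "i \<noteq> a" using va s by auto
      then have "?e \<le> ec s p a i" using nb i by simp
      moreover have "?e \<noteq> ec s p a i" using ec_inj[OF vp a i(1) b(1) s] i(2) by metis
      ultimately show "2 * ?t < ec s p a i" by simp
    qed
    then show ?thesis using terms_iso[OF vp pm a s va t0 i(1)] by blast
  qed
  define D where "D = \<lceil>?y0 - ?A b\<rceil> - \<lceil>p a - p b\<rceil>"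
  have F0: "FF n ?A ?y0 = ?r + D"
  proof -
    have "FF n ?A ?y0 = (\<Sum>i<n. \<lceil>p a - p i\<rceil> + (if i = b then D else 0))"
      unfolding FF_def using others D_def by (intro sum.cong) auto
    also have "\<dots> = FF n p (p a) + D" unfolding FF_def sum.distrib using b(1) by (simp add: sum.delta')
    finally show ?thesis using rank_FF[OF vp a] by simp
  qed
  have Aa: "?A a = ?y0" using va by simp
  have jump2: "FF n ?A y \<ge> FF n ?A ?y0 + 2" if y: "y > ?y0" for y
  proof -
    let ?D = "\<lambda>i. \<lceil>y - ?A i\<rceil> - \<lceil>?y0 - ?A i\<rceil>"
    have "FF n ?A y - FF n ?A ?y0 = (\<Sum>i<n. ?D i)" unfolding FF_def by (simp add: sum_subtractf)
    moreover have "(\<Sum>i\<in>{a, b}. ?D i) \<le> (\<Sum>i<n. ?D i)"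
      by (rule sum_mono2) (use a b y in \<open>auto intro: ceiling_mono\<close>)
    moreover have "?D a \<ge> 1" using y va by (simp add: one_le_ceiling)
    moreover have "?D b \<ge> 1"
    proof -
      have "y - ?A b > real_of_int M" using y yb by simp
      then have "M < \<lceil>y - ?A b\<rceil>" by (simp add: less_ceiling_iff)
      then show ?thesis using cyb by simp
    qed
    moreover have "(\<Sum>i\<in>{a, b}. ?D i) = ?D a + ?D b" using b(2) by simp
    ultimately show ?thesis by linarith
  qed
  let ?rz = "FF n ?A ?y0"
  have O0: "OS n ?A ?rz = ?y0"
  proof (rule OS_eq[OF n0])
    fix y assume "y > ?y0" then show "FF n ?A y > ?rz" using jump2[of y] by linarith
  qed simp
  have O1: "OS n ?A (?rz + 1) = ?y0"
  proof (rule OS_eq[OF n0])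
    fix y assume "y > ?y0" then show "FF n ?A y > ?rz + 1" using jump2[of y] by linarith
  qed simp
  have pr: "\<forall>i<n. 0 \<le> p i \<and> p i < 1" using vp by (simp add: vp_def)
  have o: "ostat n p v k ?t = OS n ?A k" for k by (rule ostat_OS[OF pr])
  have c0: "ostat n p v ?rz ?t = ?y0" by (rule trans[OF o O0])
  have c1: "ostat n p v (?rz + 1) ?t = ?y0" by (rule trans[OF o O1])
  have "D = 0 \<or> D = -1" unfolding D_def cyb using Db by linarith
  then have rr: "?r = ?rz \<or> ?r = ?rz + 1" using F0 by linarith
  show ?thesis by (rule collides_intro[OF _ rr]) (simp only: c0 c1)
qed



locale nbsetup =
  fixes n p v a s b
  assumes vp: "vp n p" and pm: "pm1 n v" and a: "a < n" and s: "s = 1 \<or> s = -1" and va: "v a = s"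
    and b: "b < n" "b \<noteq> a" and nb: "\<forall>c<n. c \<noteq> a \<longrightarrow> ec s p a b \<le> ec s p a c"
begin

lemma e_bounds: "0 < ec s p a b" "ec s p a b < 1"
  using ec_pos[OF vp a b(1) b(2) s] ec_lt1 by auto

lemma no_coll_before:
  assumes "0 < t" "2*t < ec s p a b"
  shows "\<not> collides n p v a t"
proof (rule isolated[OF vp pm a s va])
  show "0 \<le> t" using assms by simp
  show "\<forall>i<n. v i = -s \<longrightarrow> 2*t < ec s p a i"
  proof (intro allI impI)
    fix i assume i: "i < n" "v i = -s"
    then have "i \<noteq> a" using va s by auto
    then show "2*t < ec s p a i" using nb i assms by force
  qed
qed

lemma coll_lower:
  assumes "coll_dist n p v a = Some c"
  shows "ec s p a b \<le> 2 * c"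
proof -
  let ?C = "{t\<in>{0<..1}. collides n p v a t}"
  have ne: "?C \<noteq> {}" and c: "c = Inf ?C"
    using assms unfolding coll_dist_def by (auto split: if_splits)
  have "ec s p a b / 2 \<le> Inf ?C"
  proof (rule cInf_greatest[OF ne])
    fix t assume "t \<in> ?C"
    then show "ec s p a b / 2 \<le> t" using no_coll_before[of t] by force
  qed
  then show ?thesis using c by simp
qed

lemma coll_meet:
  assumes vb: "v b = -s"
  shows "coll_dist n p v a = Some (ec s p a b / 2)"
proof -
  let ?C = "{t\<in>{0<..1}. collides n p v a t}"
  have m: "ec s p a b / 2 \<in> ?C"
    using meeting[OF vp pm a s va b nb vb] e_bounds by simp
  have "Inf ?C = ec s p a b / 2"
  proof (rule cInf_eq_minimum[OF m])
    fix t assume "t \<in> ?C"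
    then show "ec s p a b / 2 \<le> t" using no_coll_before[of t] by force
  qed
  then show ?thesis using m unfolding coll_dist_def by auto
qed

lemma coll_same:
  assumes vb: "v b = s"
  shows "coll_dist n p v a \<noteq> Some (ec s p a b / 2)"
proof
  assume h: "coll_dist n p v a = Some (ec s p a b / 2)"
  let ?e = "ec s p a b"
  have "\<exists>d>0. \<forall>i<n. \<forall>e. 0 < e \<and> e \<le> d \<longrightarrow> (v i = -s \<longrightarrow> ?e + e \<le> ec s p a i)"
  proof (rule ex_delta_fin)
    fix i assume i: "i < n"
    show "\<exists>d>0. \<forall>e. 0 < e \<and> e \<le> d \<longrightarrow> (v i = -s \<longrightarrow> ?e + e \<le> ec s p a i)"
    proof (cases "v i = -s")
      case True
      then have "i \<noteq> a" "i \<noteq> b" using va vb s by auto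
      then have "?e \<le> ec s p a i" "?e \<noteq> ec s p a i"
        using nb i ec_inj[OF vp a i b(1) s] by auto
      then have "?e < ec s p a i" by simp
      then show ?thesis by (intro exI[of _ "ec s p a i - ?e"]) auto
    next
      case False
      then show ?thesis by (intro exI[of _ 1]) auto
    qed
  qed
  then obtain d where d: "d > 0" "\<forall>i<n. v i = -s \<longrightarrow> ?e + d \<le> ec s p a i"
    by (meson order_refl)
  let ?C = "{t\<in>{0<..1}. collides n p v a t}"
  have ne: "?C \<noteq> {}" and c: "?e / 2 = Inf ?C"
    using h unfolding coll_dist_def by (auto split: if_splits)
  have "(?e + d) / 2 \<le> Inf ?C"
  proof (rule cInf_greatest[OF ne])
    fix t assume t: "t \<in> ?C"
    show "(?e + d) / 2 \<le> t"
    proof (rule ccontr)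
      assume "\<not> (?e + d) / 2 \<le> t"
      then have lt: "2 * t < ?e + d" by simp
      have "\<not> collides n p v a t"
      proof (rule isolated[OF vp pm a s va])
        show "0 \<le> t" using t by simp
        show "\<forall>i<n. v i = -s \<longrightarrow> 2*t < ec s p a i" using d lt by force
      qed
      then show False using t by simp
    qed
  qed
  then show False using c d by simp
qed

end



lemma run_Suc_eq:
  "run n cw ids alg p0 (Suc r) =
     (let R = run n cw ids alg p0 r; V = velocity cw (\<lambda>i. alg (ids i) (snd R i)) in
     (\<lambda>i. frac (lpos n (fst R) V i 1),
      \<lambda>i. snd R i @ [(end_dist n (fst R) V cw i, coll_dist n (fst R) V i)]))"
  by (cases "run n cw ids alg p0 r") (simp add: Let_def)

lemma run_len: "length (snd (run n cw ids alg p0 r) i) = r"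
  by (induction r) (simp_all add: run_Suc_eq Let_def del: run.simps(2))

lemma run_hist:
  "k < r \<Longrightarrow> snd (run n cw ids alg p0 r) i ! k =
     (let R = run n cw ids alg p0 k; V = velocity cw (\<lambda>i. alg (ids i) (snd R i)) in
       (end_dist n (fst R) V cw i, coll_dist n (fst R) V i))"
proof (induction r)
  case 0 then show ?case by simp
next
  case (Suc r)
  show ?case
  proof (cases "k < r")
    case True
    then show ?thesis using Suc by (simp add: run_Suc_eq Let_def nth_append run_len del: run.simps(2))
  next
    case False
    then have "k = r" using Suc by simp
    then show ?thesis by (simp add: run_Suc_eq Let_def nth_append run_len del: run.simps(2))
  qed
qed

lemma run_pos:
  "fst (run n cw ids alg p0 (Suc r)) =
     (\<lambda>i. frac (lpos n (fst (run n cw ids alg p0 r))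
        (velocity cw (\<lambda>i. alg (ids i) (snd (run n cw ids alg p0 r) i))) i 1))"
  by (simp add: run_Suc_eq Let_def del: run.simps(2))

lemma cong_cnt: "\<forall>i<n. p i = q i \<Longrightarrow> cnt n p v t y = cnt n q v t y"
proof -
  assume h: "\<forall>i<n. p i = q i"
  have 1: "{(i, m::int). i < n \<and> 0 \<le> p i + real_of_int m \<and> p i + real_of_int m + v i * t < y}
    = {(i, m::int). i < n \<and> 0 \<le> q i + real_of_int m \<and> q i + real_of_int m + v i * t < y}"
    using h by auto
  have 2: "{(i, m::int). i < n \<and> p i + real_of_int m < 0 \<and> y \<le> p i + real_of_int m + v i * t}
    = {(i, m::int). i < n \<and> q i + real_of_int m < 0 \<and> y \<le> q i + real_of_int m + v i * t}"
    using h by auto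
  show ?thesis unfolding cnt_def 1 2 ..
qed

lemma cong_ostat: "\<forall>i<n. p i = q i \<Longrightarrow> ostat n p v k t = ostat n q v k t"
proof -
  assume h: "\<forall>i<n. p i = q i"
  have "cnt n p v t y = cnt n q v t y" for y using cong_cnt[OF h] .
  then show ?thesis unfolding ostat_def by simp
qed

lemma cong_rank: "\<forall>i<n. p i = q i \<Longrightarrow> i < n \<Longrightarrow> rank n p i = rank n q i"
  unfolding rank_def by (intro arg_cong[where f=card]) auto

lemma cong_lpos: "\<forall>i<n. p i = q i \<Longrightarrow> i < n \<Longrightarrow> lpos n p v i t = lpos n q v i t"
  unfolding lpos_def using cong_ostat cong_rank by metis

lemma cong_collides: "\<forall>i<n. p i = q i \<Longrightarrow> i < n \<Longrightarrow> collides n p v i t = collides n q v i t"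
  unfolding collides_def Let_def using cong_ostat cong_rank by metis

lemma cong_coll_dist: "\<forall>i<n. p i = q i \<Longrightarrow> i < n \<Longrightarrow> coll_dist n p v i = coll_dist n q v i"
  unfolding coll_dist_def using cong_collides[of n p q i v] by simp

definition sched :: "nat \<Rightarrow> nat \<Rightarrow> bool" where
  "sched j x = (if j = 0 then True else if j = 1 then False
                else if even j then odd (x div 2 ^ ((j - 2) div 2))
                else \<not> odd (x div 2 ^ ((j - 2) div 2)))"

definition nd_alg :: "nat \<Rightarrow> percept list \<Rightarrow> bool" where
  "nd_alg x h = (if even (length h) then sched (length h div 2) x else \<not> sched (length h div 2) x)"

lemma velocity_pm1: "pm1 n (velocity cw d)"
  unfolding pm1_def velocity_def by auto

lemma velocity_neg: "velocity cw (\<lambda>i. \<not> d i) = (\<lambda>i. - velocity cw d i)"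
  unfolding velocity_def by auto

lemma run_V_even:
  "velocity cw (\<lambda>i. nd_alg (ids i) (snd (run n cw ids nd_alg p0 (2*j)) i))
     = velocity cw (\<lambda>i. sched j (ids i))"
  unfolding nd_alg_def run_len by simp

lemma run_V_odd:
  "velocity cw (\<lambda>i. nd_alg (ids i) (snd (run n cw ids nd_alg p0 (Suc (2*j))) i))
     = (\<lambda>i. - velocity cw (\<lambda>i. sched j (ids i)) i)"
  unfolding nd_alg_def run_len velocity_neg[symmetric] by simp

lemma run_even_pos:
  assumes "vp n p0" "n > 0"
  shows "\<forall>i<n. fst (run n cw ids nd_alg p0 (2*j)) i = p0 i"
proof (induction j)
  case 0 then show ?case by simp
next
  case (Suc j)
  let ?P = "fst (run n cw ids nd_alg p0 (2*j))"
  let ?V = "velocity cw (\<lambda>i. sched j (ids i))"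
  let ?P1 = "fst (run n cw ids nd_alg p0 (Suc (2*j)))"
  have P1: "?P1 = (\<lambda>i. frac (lpos n ?P ?V i 1))"
    unfolding run_pos run_V_even ..
  have P1': "\<forall>i<n. ?P1 i = frac (lpos n p0 ?V i 1)"
    unfolding P1 using cong_lpos[OF Suc.IH] by simp
  have "fst (run n cw ids nd_alg p0 (2 * Suc j)) = fst (run n cw ids nd_alg p0 (Suc (Suc (2*j))))" by simp
  also have "\<dots> = (\<lambda>i. frac (lpos n ?P1 (\<lambda>i. - ?V i) i 1))"
    unfolding run_pos[of n cw ids nd_alg p0 "Suc (2*j)"] run_V_odd ..
  finally have e: "fst (run n cw ids nd_alg p0 (2 * Suc j)) = (\<lambda>i. frac (lpos n ?P1 (\<lambda>i. - ?V i) i 1))" .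
  show ?case
  proof (intro allI impI)
    fix i assume i: "i < n"
    have "frac (lpos n ?P1 (\<lambda>i. - ?V i) i 1) = frac (lpos n (\<lambda>i. frac (lpos n p0 ?V i 1)) (\<lambda>i. - ?V i) i 1)"
      using cong_lpos[OF P1' i] by simp
    also have "\<dots> = p0 i" by (rule two_rounds[OF assms velocity_pm1 i])
    finally show "fst (run n cw ids nd_alg p0 (2 * Suc j)) i = p0 i" unfolding e by simp
  qed
qed

lemma hist_coll:
  assumes "vp n p0" "n > 0" "a < n" "j < M"
  shows "snd (snd (run n cw ids nd_alg p0 (2*M)) a ! (2*j))
     = coll_dist n p0 (velocity cw (\<lambda>i. sched j (ids i))) a"
proof -
  have "2*j < 2*M" using assms by simp
  then have "snd (snd (run n cw ids nd_alg p0 (2*M)) a ! (2*j)) =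
     coll_dist n (fst (run n cw ids nd_alg p0 (2*j))) (velocity cw (\<lambda>i. sched j (ids i))) a"
    using run_hist[of "2*j" "2*M" n cw ids nd_alg p0 a] by (simp add: Let_def run_V_even)
  also have "\<dots> = coll_dist n p0 (velocity cw (\<lambda>i. sched j (ids i))) a"
    using cong_coll_dist[OF run_even_pos[OF assms(1,2)] assms(3)] by simp
  finally show ?thesis .
qed



lemma bits_differ:
  fixes x y :: nat
  shows "x < 2^B \<Longrightarrow> y < 2^B \<Longrightarrow> x \<noteq> y \<Longrightarrow> \<exists>k<B. odd (x div 2^k) \<noteq> odd (y div 2^k)"
proof (induction B arbitrary: x y)
  case 0 then show ?case by simp
next
  case (Suc B)
  show ?case
  proof (cases "odd x = odd y")
    case False
    then show ?thesis by (intro exI[of _ 0]) simp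
  next
    case True
    have "x div 2 \<noteq> y div 2"
    proof
      assume "x div 2 = y div 2"
      moreover have "x mod 2 = y mod 2" using True by presburger
      ultimately have "2 * (x div 2) + x mod 2 = 2 * (y div 2) + y mod 2" by simp
      then show False using Suc.prems(3) by presburger
    qed
    moreover have "x div 2 < 2^B" "y div 2 < 2^B" using Suc.prems by auto
    ultimately obtain k where "k < B" "odd (x div 2 div 2^k) \<noteq> odd (y div 2 div 2^k)"
      using Suc.IH by blast
    then show ?thesis
      by (intro exI[of _ "Suc k"]) (simp add: div_mult2_eq)
  qed
qed

lemma sched_realize:
  fixes x y :: nat
  assumes "x < 2^B" "y < 2^B" "x \<noteq> y"
  shows "\<exists>j<2+2*B. sched j x = d \<and> sched j y = e"
proof (cases "d = e")
  case True
  show ?thesis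
  proof (cases d)
    case True then show ?thesis using \<open>d = e\<close> by (intro exI[of _ 0]) (simp add: sched_def)
  next
    case False then show ?thesis using \<open>d = e\<close> by (intro exI[of _ 1]) (simp add: sched_def)
  qed
next
  case False
  obtain k where k: "k < B" "odd (x div 2^k) \<noteq> odd (y div 2^k)" using bits_differ[OF assms] by blast
  have s2: "sched (2 + 2*k) z = odd (z div 2^k)" for z by (simp add: sched_def)
  have s3: "sched (3 + 2*k) z = (\<not> odd (z div 2^k))" for z by (simp add: sched_def)
  show ?thesis
  proof (cases "odd (x div 2^k) = d")
    case True
    have "2 + 2*k < 2 + 2*B" using k by simp
    moreover have "sched (2 + 2*k) x = d \<and> sched (2 + 2*k) y = e" unfolding s2 using True k False by auto
    ultimately show ?thesis by blast
  next
    case F2: False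
    have "3 + 2*k < 2 + 2*B" using k by simp
    moreover have "sched (3 + 2*k) x = d \<and> sched (3 + 2*k) y = e" unfolding s3 using F2 k False by auto
    ultimately show ?thesis by blast
  qed
qed

lemma nb_exists:
  assumes "a < n" "2 \<le> n"
  shows "\<exists>b. b < n \<and> b \<noteq> a \<and> (\<forall>c<n. c \<noteq> a \<longrightarrow> ec s p a b \<le> ec s p a c)"
proof -
  let ?S = "{c. c < n \<and> c \<noteq> a}"
  have fin: "finite ?S" by simp
  have ne: "?S \<noteq> {}"
  proof (cases "a = 0")
    case True then have "1 \<in> ?S" using assms by auto
    then show ?thesis by blast
  next
    case False then have "0 \<in> ?S" using assms by auto
    then show ?thesis by blast
  qed
  let ?b = "arg_min_on (ec s p a) ?S"
  have m: "?b \<in> ?S" "\<not>(\<exists>x\<in>?S. ec s p a x < ec s p a ?b)" using arg_min_if_finite[OF fin ne] by auto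
  have h: "ec s p a ?b \<le> ec s p a c" if "c < n" "c \<noteq> a" for c
  proof -
    have "c \<in> ?S" using that by simp
    then show ?thesis using m(2) by (meson not_less)
  qed
  show ?thesis using m(1) h by blast
qed

lemma ec_neg:
  assumes "vp n p" "a < n" "c < n" "c \<noteq> a" "s = 1 \<or> s = -1"
  shows "ec (-s) p a c = 1 - ec s p a c"
proof -
  have "0 < ec s p a c" by (rule ec_pos[OF assms])
  then have ni: "s * (p c - p a) \<notin> \<int>" unfolding ec_def by simp
  have "ec (-s) p a c = frac (- (s * (p c - p a)))" unfolding ec_def by simp
  also have "\<dots> = 1 - ec s p a c" using ni unfolding ec_def by (simp add: frac_neg)
  finally show ?thesis .
qed

definition gset :: "bool \<Rightarrow> nat \<Rightarrow> nat \<Rightarrow> percept list \<Rightarrow> real set" where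
  "gset d M x h = (\<lambda>j. 2 * the (snd (h ! (2*j)))) ` {j. j < M \<and> sched j x = d \<and> snd (h ! (2*j)) \<noteq> None}"

definition nd_out :: "nat \<Rightarrow> nat \<Rightarrow> percept list \<Rightarrow> real \<times> real \<times> bool \<times> bool" where
  "nd_out M x h = (let gR = Min (gset True M x h); gL = Min (gset False M x h) in
     (gR, 1 - gL, snd (h ! 0) \<noteq> Some (gR / 2), snd (h ! 2) \<noteq> Some (gL / 2)))"

definition sg :: "bool \<Rightarrow> bool \<Rightarrow> real" where
  "sg d c = (if d = c then 1 else -1)"

lemma vel_eq: "velocity cw (\<lambda>i. sched j (ids i)) i = sg (sched j (ids i)) (cw i)"
  unfolding velocity_def sg_def by simp

lemma sg_pm: "sg d c = 1 \<or> sg d c = -1" unfolding sg_def by auto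

lemma gset_min:
  assumes vp: "vp n p0" and a: "a < n" and b: "b < n" "b \<noteq> a"
    and nb: "\<forall>c<n. c \<noteq> a \<longrightarrow> ec (sg d (cw a)) p0 a b \<le> ec (sg d (cw a)) p0 a c"
    and ev: "\<exists>j<M. sched j (ids a) = d \<and> velocity cw (\<lambda>i. sched j (ids i)) b = - sg d (cw a)"
  shows "Min (gset d M (ids a) (snd (run n cw ids nd_alg p0 (2*M)) a)) = ec (sg d (cw a)) p0 a b"
proof -
  let ?h = "snd (run n cw ids nd_alg p0 (2*M)) a"
  let ?s = "sg d (cw a)"
  let ?e = "ec ?s p0 a b"
  have n0: "n > 0" using a by simp
  have loc: "nbsetup n p0 (velocity cw (\<lambda>i. sched j (ids i))) a ?s b" if "sched j (ids a) = d" for j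
    unfolding nbsetup_def using vp velocity_pm1 a sg_pm b nb that by (auto simp: vel_eq)
  have hc: "snd (?h ! (2*j)) = coll_dist n p0 (velocity cw (\<lambda>i. sched j (ids i))) a" if "j < M" for j
    by (rule hist_coll[OF vp n0 a that])
  have fin: "finite (gset d M (ids a) ?h)" unfolding gset_def by simp
  show ?thesis
  proof (rule Min_eqI[OF fin])
    fix y assume "y \<in> gset d M (ids a) ?h"
    then obtain j c where j: "j < M" "sched j (ids a) = d" "snd (?h ! (2*j)) = Some c" and y: "y = 2 * c"
      unfolding gset_def by auto
    have "coll_dist n p0 (velocity cw (\<lambda>i. sched j (ids i))) a = Some c" using hc[OF j(1)] j(3) by simp
    then show "?e \<le> y" using nbsetup.coll_lower[OF loc[OF j(2)]] y by simp
  next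
    obtain j where j: "j < M" "sched j (ids a) = d" "velocity cw (\<lambda>i. sched j (ids i)) b = - ?s"
      using ev by blast
    have "coll_dist n p0 (velocity cw (\<lambda>i. sched j (ids i))) a = Some (?e / 2)"
      by (rule nbsetup.coll_meet[OF loc[OF j(2)] j(3)])
    then have "snd (?h ! (2*j)) = Some (?e / 2)" using hc[OF j(1)] by simp
    then have nn: "snd (?h ! (2*j)) \<noteq> None" by (metis option.distinct(2))
    have jin: "j \<in> {j. j < M \<and> sched j (ids a) = d \<and> snd (?h ! (2*j)) \<noteq> None}" using j(1,2) nn by blast
    have "?e = 2 * the (snd (?h ! (2*j)))" using \<open>snd (?h ! (2*j)) = Some (?e / 2)\<close> by simp
    then show "?e \<in> gset d M (ids a) ?h" unfolding gset_def by (rule rev_image_eqI[OF jin])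
  qed
qed



lemma oc_ec: "own_coord cw p a (p c) = ec (sg True (cw a)) p a c"
  unfolding own_coord_def ec_def own_sgn_def sg_def by simp

lemma event:
  assumes "ids a < 2^B" "ids b < 2^B" "ids a \<noteq> ids b"
  shows "\<exists>j<2+2*B. sched j (ids a) = d \<and> velocity cw (\<lambda>i. sched j (ids i)) b = - sg d (cw a)"
proof -
  let ?e = "if d = cw a then \<not> cw b else cw b"
  obtain j where j: "j < 2+2*B" "sched j (ids a) = d" "sched j (ids b) = ?e"
    using sched_realize[OF assms] by blast
  have "velocity cw (\<lambda>i. sched j (ids i)) b = - sg d (cw a)"
    unfolding vel_eq j(3) sg_def by auto
  then show ?thesis using j by blast
qed

lemma agent_correct:
  assumes vc: "valid_config N n p ids" and ib: "\<forall>i<n. ids i < 2^B" and a: "a < n"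
  defines "M \<equiv> 2 + 2*B"
  shows "nd_correct n cw p a (nd_out M (ids a) (snd (run n cw ids nd_alg p (2*M)) a))"
proof -
  let ?h = "snd (run n cw ids nd_alg p (2*M)) a"
  have vp: "vp n p" using vc unfolding valid_config_def vp_def by auto
  have n2: "2 \<le> n" using vc unfolding valid_config_def by auto
  have n0: "n > 0" using n2 by simp
  have inj: "inj_on ids {..<n}" using vc unfolding valid_config_def by auto
  let ?sR = "sg True (cw a)"
  let ?sL = "sg False (cw a)"
  have sL: "?sL = - ?sR" unfolding sg_def by auto
  obtain bR where bR: "bR < n" "bR \<noteq> a" "\<forall>c<n. c \<noteq> a \<longrightarrow> ec ?sR p a bR \<le> ec ?sR p a c"
    using nb_exists[OF a n2] by blast
  obtain bL where bL: "bL < n" "bL \<noteq> a" "\<forall>c<n. c \<noteq> a \<longrightarrow> ec ?sL p a bL \<le> ec ?sL p a c"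
    using nb_exists[OF a n2] by blast
  have ev: "\<exists>j<M. sched j (ids a) = d \<and> velocity cw (\<lambda>i. sched j (ids i)) b = - sg d (cw a)"
    if "b < n" "b \<noteq> a" for b d
  proof -
    have "ids a \<noteq> ids b" using inj a that by (auto dest: inj_onD)
    then show ?thesis using event[of ids a B b d cw] ib a that unfolding M_def by auto
  qed
  have gR: "Min (gset True M (ids a) ?h) = ec ?sR p a bR"
    by (rule gset_min[OF vp a bR(1,2) bR(3) ev[OF bR(1,2)]])
  have gL: "Min (gset False M (ids a) ?h) = ec ?sL p a bL"
    by (rule gset_min[OF vp a bL(1,2) bL(3) ev[OF bL(1,2)]])
  have M0: "0 < M" "1 < M" unfolding M_def by auto
  have h0: "snd (?h ! 0) = coll_dist n p (velocity cw (\<lambda>i. sched 0 (ids i))) a"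
    using hist_coll[OF vp n0 a M0(1), of cw ids] by simp
  have h2: "snd (?h ! 2) = coll_dist n p (velocity cw (\<lambda>i. sched 1 (ids i))) a"
    using hist_coll[OF vp n0 a M0(2), of cw ids] by simp
  have s_pm: "?sR = 1 \<or> ?sR = -1" "?sL = 1 \<or> ?sL = -1" by (rule sg_pm)+
  have vaR: "velocity cw (\<lambda>i. sched 0 (ids i)) a = ?sR" by (simp add: velocity_def sched_def sg_def)
  have vaL: "velocity cw (\<lambda>i. sched 1 (ids i)) a = ?sL" by (simp add: velocity_def sched_def sg_def)
  have locR: "nbsetup n p (velocity cw (\<lambda>i. sched 0 (ids i))) a ?sR bR"
    by (rule nbsetup.intro[OF vp velocity_pm1 a s_pm(1) vaR bR(1) bR(2) bR(3)])
  have locL: "nbsetup n p (velocity cw (\<lambda>i. sched 1 (ids i))) a ?sL bL"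
    by (rule nbsetup.intro[OF vp velocity_pm1 a s_pm(2) vaL bL(1) bL(2) bL(3)])
  have SR: "(snd (?h ! 0) \<noteq> Some (ec ?sR p a bR / 2)) \<longleftrightarrow> cw bR = cw a"
  proof (cases "cw bR = cw a")
    case True
    then have "velocity cw (\<lambda>i. sched 0 (ids i)) bR = ?sR" by (simp add: velocity_def sched_def sg_def)
    then show ?thesis using nbsetup.coll_same[OF locR] h0 True by simp
  next
    case False
    then have "velocity cw (\<lambda>i. sched 0 (ids i)) bR = - ?sR" by (auto simp: velocity_def sched_def sg_def)
    then show ?thesis using nbsetup.coll_meet[OF locR] h0 False by simp
  qed
  have SL: "(snd (?h ! 2) \<noteq> Some (ec ?sL p a bL / 2)) \<longleftrightarrow> cw bL = cw a"
  proof (cases "cw bL = cw a")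
    case True
    then have "velocity cw (\<lambda>i. sched 1 (ids i)) bL = ?sL" by (simp add: velocity_def sched_def sg_def)
    then show ?thesis using nbsetup.coll_same[OF locL] h2 True by simp
  next
    case False
    then have "velocity cw (\<lambda>i. sched 1 (ids i)) bL = - ?sL" by (auto simp: velocity_def sched_def sg_def)
    then show ?thesis using nbsetup.coll_meet[OF locL] h2 False by simp
  qed
  have negL: "ec ?sL p a c = 1 - ec ?sR p a c" if "c < n" "c \<noteq> a" for c
    unfolding sL by (rule ec_neg[OF vp a that s_pm(1)])
  have isR: "is_Right n cw p a bR" unfolding is_Right_def oc_ec using bR by auto
  have isL: "is_Left n cw p a bL" unfolding is_Left_def oc_ec
  proof (intro conjI allI impI)
    fix c assume c: "c < n" "c \<noteq> a"
    show "ec ?sR p a c \<le> ec ?sR p a bL" using bL(3) c negL[OF c] negL[OF bL(1,2)] by force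
  qed (use bL in auto)
  have xL: "1 - ec ?sL p a bL = own_coord cw p a (p bL)" unfolding oc_ec negL[OF bL(1,2)] by simp
  show ?thesis
    unfolding nd_correct_def nd_out_def Let_def gR gL
    using isR isL SR SL xL by (auto simp: oc_ec)
qed



lemma bound:
  fixes N B :: nat
  assumes "5 \<le> N" "1 \<le> B" "2^(B-1) \<le> N"
  shows "real (2 * (2 + 2*B)) \<le> (8 + 4 / ln 2) * ln (real N)"
proof -
  have l2: "0 < ln (2::real)" by simp
  have lN1: "1 \<le> ln (real N)"
  proof -
    have "exp 1 \<le> (3::real)" by (rule exp_le)
    then have "exp 1 \<le> real N" using assms(1) by simp
    then show ?thesis using assms(1) by (subst ln_ge_iff) auto
  qed
  have "ln (real (2^(B-1))) \<le> ln (real N)"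
    using assms by (subst ln_le_cancel_iff) auto
  then have k: "real (B-1) * ln 2 \<le> ln (real N)" by (simp add: ln_realpow)
  then have k2: "real (B-1) \<le> ln (real N) / ln 2" using l2 by (simp add: field_simps)
  have "real (2 * (2 + 2*B)) = 8 + 4 * real (B-1)" using assms(2) by (simp add: of_nat_diff)
  also have "\<dots> \<le> 8 * ln (real N) + 4 * (ln (real N) / ln 2)" using k2 lN1 by linarith
  also have "\<dots> = (8 + 4 / ln 2) * ln (real N)" by (simp add: field_simps)
  finally show ?thesis .
qed

theorem proposition5:
  shows "\<exists>C::real. \<forall>N::nat. \<exists>(T::nat) (alg :: nat \<Rightarrow> percept list \<Rightarrow> bool)
           (output :: nat \<Rightarrow> percept list \<Rightarrow> real \<times> real \<times> bool \<times> bool).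
     real T \<le> C * ln (real N) \<and>
     (\<forall>n p cw ids. valid_config N n p ids \<longrightarrow>
        (\<forall>a<n. nd_correct n cw p a (output (ids a) (snd (run n cw ids alg p T) a))))"
proof -
  let ?C = "8 + 4 / ln (2::real)"
  have C0: "0 < ?C" by (simp add: add_pos_pos)
  have "\<exists>(T::nat) (alg :: nat \<Rightarrow> percept list \<Rightarrow> bool)
           (output :: nat \<Rightarrow> percept list \<Rightarrow> real \<times> real \<times> bool \<times> bool).
     real T \<le> ?C * ln (real N) \<and>
     (\<forall>n p cw ids. valid_config N n p ids \<longrightarrow>
        (\<forall>a<n. nd_correct n cw p a (output (ids a) (snd (run n cw ids alg p T) a))))" for N :: nat
  proof (cases "N < 5")
    case True
    have "0 \<le> ln (real N)" by (cases "N = 0") auto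
    then have "real 0 \<le> ?C * ln (real N)" using C0 by simp
    moreover have "\<not> valid_config N n p ids" for n p ids using True unfolding valid_config_def by auto
    ultimately show ?thesis by blast
  next
    case False
    then have N5: "5 \<le> N" by simp
    define B where "B = (LEAST B. N < 2^B)"
    have ex: "N < 2^N" by (rule less_exp)
    have NB: "N < 2^B" unfolding B_def by (rule LeastI[of "\<lambda>B. N < 2^B", OF ex])
    have B1: "1 \<le> B"
    proof (rule ccontr)
      assume "\<not> 1 \<le> B" then have "B = 0" by simp
      then show False using NB N5 by simp
    qed
    have "\<not> N < 2^(B-1)" unfolding B_def by (rule not_less_Least) (use B1 in \<open>simp add: B_def[symmetric]\<close>)
    then have NB2: "2^(B-1) \<le> N" by simp
    have ib: "\<forall>i<n. ids i < 2^B" if "valid_config N n p ids" for n p ids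
      using that NB unfolding valid_config_def by fastforce
    show ?thesis
      apply (intro exI[of _ "2 * (2 + 2*B)"] exI[of _ nd_alg] exI[of _ "nd_out (2 + 2*B)"] conjI)
       apply (rule bound[OF N5 B1 NB2])
      using agent_correct ib by blast
  qed
  then show ?thesis by blast
qed


end
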